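(* Let $d\ge2$, let $G$ be a germ and let $\mathcal{Q}_G$ be the (nonempty) set of all qplexes containing $G$. Define the stem $\mathscr{S}(G)=\bigcap_{Q\in\mathcal{Q}_G}Q$ and envelope $\mathscr{E}(G)=\bigcup_{Q\in\mathcal{Q}_G}Q$. Then $$\mathscr{S}(G)=\overline{\mathrm{conv}}(\Delta_{\rm e}\cup B_{\rm i}\cup G),\qquad \mathscr{E}(G)=\Delta\cap B_{\rm o}\cap G^*,$$ and $\mathscr{S}(G)$ and $\mathscr{E}(G)$ are mutually polar: $\mathscr{S}(G)^*=\mathscr{E}(G)$ and $\mathscr{E}(G)^*=\mathscr{S}(G)$. In particular (taking $G=\emptyset$) the intersection of all qplexes is $\overline{\mathrm{conv}}(\Delta_{\rm e}\cup B_{\rm i})$ and the union of all qplexes is $\Delta\cap B_{\rm o}$.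
   Context: Fix an integer $d\ge 2$. $\langle\cdot,\cdot\rangle$ is the standard inner product on $\mathbb{R}^{d^2}$, $\|\cdot\|$ the Euclidean norm. $\Delta=\{p\in\mathbb{R}^{d^2}: p(i)\ge0,\ \sum_ip(i)=1\}$; $H=\{u\in\mathbb{R}^{d^2}:\sum_i u(i)=1\}$; $c=(1/d^2,\dots,1/d^2)$. $\overline{\mathrm{conv}}(X)$ denotes the closed convex hull. For $A\subseteq H$ the polar is $A^*=\{u\in H:\langle u,v\rangle\ge\frac{1}{d(d+1)}\ \forall v\in A\}$. Out-ball: $B_{\rm o}=\{u\in H:\|u-c\|\le r_{\rm o}\}$, $r_{\rm o}^2=\frac{d-1}{d^2(d+1)}$. In-ball: $B_{\rm i}=\{u\in H:\|u-c\|\le r_{\rm i}\}$, $r_{\rm i}^2=\frac{1}{d^2(d^2-1)}$. Basis distributions: $e_k(i)=\frac{1}{d+1}(\delta_{ki}+\frac1d)$, $k=1,\dots,d^2$; basis simplex $\Delta_{\rm e}=\mathrm{conv}\{e_1,\dots,e_{d^2}\}$. A subset $A\subseteq\Delta$ is a germ if $\frac{1}{d(d+1)}\le\langle p,s\rangle\le\frac{2}{d(d+1)}$ for all $p,s\in A$. A qplex is a set $Q\subseteq\Delta\cap B_{\rm o}$ with $Q^*=Q$ (equivalently, a maximal germ). *)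

theory Defs
  imports "HOL-Analysis.Analysis"
begin

text \<open>Points of R^(d^2) are vectors real^'n with CARD('n) = d^2 (assumed in the theorem).
  The inner product is the standard one (\<bullet>), the norm is Euclidean.\<close>

definition probSimplex :: "(real^'n) set" where
  "probSimplex = {p. (\<forall>i. p $ i \<ge> 0) \<and> (\<Sum>i\<in>UNIV. p $ i) = 1}"

definition hypH :: "(real^'n) set" where
  "hypH = {u. (\<Sum>i\<in>UNIV. u $ i) = 1}"

definition cvec :: "nat \<Rightarrow> real^'n" where
  "cvec d = (\<chi> i. 1 / (real d)^2)"

definition polar :: "nat \<Rightarrow> (real^'n) set \<Rightarrow> (real^'n) set" where
  "polar d A = {u \<in> hypH. \<forall>v\<in>A. inner u v \<ge> 1 / (real d * (real d + 1))}"

definition outBall :: "nat \<Rightarrow> (real^'n) set" where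
  "outBall d = {u \<in> hypH. norm (u - cvec d) \<le> sqrt ((real d - 1) / ((real d)^2 * (real d + 1)))}"

definition inBall :: "nat \<Rightarrow> (real^'n) set" where
  "inBall d = {u \<in> hypH. norm (u - cvec d) \<le> sqrt (1 / ((real d)^2 * ((real d)^2 - 1)))}"

definition basisDist :: "nat \<Rightarrow> 'n \<Rightarrow> real^'n" where
  "basisDist d k = (\<chi> i. (1 / (real d + 1)) * ((if k = i then 1 else 0) + 1 / real d))"

definition basisSimplex :: "nat \<Rightarrow> (real^'n) set" where
  "basisSimplex d = convex hull (range (basisDist d))"

definition germ :: "nat \<Rightarrow> (real^'n) set \<Rightarrow> bool" where
  "germ d A \<longleftrightarrow> A \<subseteq> probSimplex \<and>
     (\<forall>p\<in>A. \<forall>s\<in>A. 1 / (real d * (real d + 1)) \<le> inner p s \<and> inner p s \<le> 2 / (real d * (real d + 1)))"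

definition qplex :: "nat \<Rightarrow> (real^'n) set \<Rightarrow> bool" where
  "qplex d Q \<longleftrightarrow> Q \<subseteq> probSimplex \<inter> outBall d \<and> polar d Q = Q"

end

theory Submission imports Defs begin

lemma fr1: "(x::real) > 0 \<Longrightarrow> 1/x^2 + (x-1)/(x^2*(x+1)) = 2/(x*(x+1))"
proof -
  assume x: "x > 0"
  then have "x \<noteq> 0" "x + 1 \<noteq> 0" by auto
  then show ?thesis by (simp add: divide_simps) (simp add: algebra_simps power2_eq_square)
qed
lemma fr2: "(x::real) \<ge> 2 \<Longrightarrow> 1/(x^2*(x^2-1)) * ((x-1)/(x^2*(x+1))) = (1/(x^2*(x+1)))^2"
proof -
  assume "x \<ge> 2"
  then have "x^2 - 1 = (x-1)*(x+1)" "x - 1 \<noteq> 0" "x+1 \<noteq> 0" "x \<noteq> 0" by (auto simp: algebra_simps power2_eq_square)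
  then show ?thesis by (simp add: divide_simps, simp add: eval_nat_numeral algebra_simps)
qed
lemma fr3: "(x::real) > 0 \<Longrightarrow> 1/x^2 - 1/(x^2*(x+1)) = 1/(x*(x+1))"
proof -
  assume x: "x > 0"
  then have "x \<noteq> 0" "x + 1 \<noteq> 0" by auto
  then show ?thesis by (simp add: divide_simps) (simp add: algebra_simps power2_eq_square)
qed

lemma g1: "(x::real) > 0 \<Longrightarrow> 1/(x+1) + x^2*(1/(x+1)/x) = 1"
proof -
  assume "x > 0" then have "x \<noteq> 0" "x + 1 \<noteq> 0" by auto
  then show ?thesis by (simp add: divide_simps power2_eq_square)
qed
lemma g2: "(x::real) > 0 \<Longrightarrow> 1/(x+1) * a + 1/(x+1)/x = (a + 1/x)/(x+1)"
  by (simp add: add_divide_distrib)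
lemma g3: "(x::real) > 0 \<Longrightarrow> (1/x + 1/x)/(x+1) = 2/(x*(x+1))"
  by simp

lemma g4: "(x::real) \<ge> 2 \<Longrightarrow> 1/(x^2*(x^2-1)) \<le> (x-1)/(x^2*(x+1))"
proof -
  assume x: "x \<ge> 2"
  have f: "x^2 - 1 = (x-1)*(x+1)" by (simp add: algebra_simps power2_eq_square)
  have "(x-1)/(x^2*(x+1)) = (x-1)^2/(x^2*(x^2-1))"
    using x unfolding f by (simp add: power2_eq_square)
  moreover have "1 \<le> (x-1)^2" using x by (simp add: one_le_power)
  moreover have "0 \<le> x^2*(x^2-1)" using x by (simp add: f)
  ultimately show ?thesis by (simp add: divide_right_mono)
qed

context
  fixes d :: nat
  assumes d2: "d \<ge> 2" and card: "CARD('n::finite) = d^2"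
begin

lemma dpos: "real d > 0" using d2 by simp

lemma nz1[simp]: "real d + real d * real d \<noteq> 0" "real d * (real d + 1) \<noteq> 0" "real d + 1 \<noteq> 0" "real d \<noteq> 0"
  using dpos add_pos_pos[OF dpos mult_pos_pos[OF dpos dpos]] by auto

lemma ro_nn: "0 \<le> (real d - 1) / ((real d)^2 * (real d + 1))"
  using d2 by simp

lemma ri_nn: "0 \<le> (real d)^2 * ((real d)^2 - 1)"
proof -
  have "(1::real) \<le> (real d)^2" using d2 by (simp add: one_le_power)
  then show ?thesis by simp
qed

lemma sum_H_lin:
  fixes u :: "real^'n"
  assumes "u \<in> hypH"
  shows "(\<Sum>i\<in>UNIV. a * u$i) = a"
  using assms by (simp add: hypH_def sum_distrib_left[symmetric])

lemma cvec_H: "(cvec d :: real^'n) \<in> hypH"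
  using card dpos by (simp add: hypH_def cvec_def)

lemma inner_c: fixes u :: "real^'n" assumes "u \<in> hypH"
  shows "inner u (cvec d) = 1/(real d)^2"
proof -
  have "inner u (cvec d) = (\<Sum>i\<in>UNIV. (1/(real d)^2) * u$i)"
    by (simp add: inner_vec_def cvec_def mult.commute)
  also have "\<dots> = 1/(real d)^2" using sum_H_lin[OF assms] .
  finally show ?thesis .
qed

lemma inner_H: fixes u v :: "real^'n" assumes "u \<in> hypH" "v \<in> hypH"
  shows "inner u v = 1/(real d)^2 + inner (u - cvec d) (v - cvec d)"
  using inner_c[OF assms(1)] inner_c[OF assms(2)] inner_c[OF cvec_H]
  by (simp add: inner_diff_left inner_diff_right inner_commute)

lemma norm_c: fixes u :: "real^'n" assumes "u \<in> hypH"
  shows "(norm (u - cvec d))^2 = inner u u - 1/(real d)^2"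
  using inner_H[OF assms assms] by (simp add: power2_norm_eq_inner)

lemma outBall_iff: "(u::real^'n) \<in> outBall d \<longleftrightarrow> u \<in> hypH \<and> inner u u \<le> 2/(real d * (real d + 1))"
proof -
  have e: "1/(real d)^2 + (real d - 1) / ((real d)^2 * (real d + 1)) = 2/(real d * (real d + 1))"
    using fr1[OF dpos] .
  have "norm (u - cvec d) \<le> sqrt r \<longleftrightarrow> (norm (u - cvec d))^2 \<le> r" for r
    by (metis norm_ge_zero real_sqrt_abs real_sqrt_le_iff abs_of_nonneg)
  then show ?thesis using norm_c e unfolding outBall_def by force
qed

lemma sqrt_ro: "sqrt ((real d - 1) / ((real d)^2 * (real d + 1))) * sqrt ((real d - 1) / ((real d)^2 * (real d + 1)))
   = (real d - 1) / ((real d)^2 * (real d + 1))"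
  using d2 by simp

lemma ri_ro: "sqrt (1 / ((real d)^2 * ((real d)^2 - 1))) * sqrt ((real d - 1) / ((real d)^2 * (real d + 1)))
   = 1/((real d)^2 * (real d + 1))"
proof -
  have "1 / ((real d)^2 * ((real d)^2 - 1)) * ((real d - 1) / ((real d)^2 * (real d + 1)))
     = (1/((real d)^2 * (real d + 1)))^2"
    using fr2[of "real d"] d2 by simp
  then show ?thesis using dpos by (simp add: real_sqrt_mult[symmetric])
qed

lemma OO: fixes u v :: "real^'n" assumes "u \<in> outBall d" "v \<in> outBall d"
  shows "inner u v \<le> 2/(real d * (real d + 1))"
proof -
  let ?r = "sqrt ((real d - 1) / ((real d)^2 * (real d + 1)))"
  have h: "u \<in> hypH" "v \<in> hypH" "norm (u - cvec d) \<le> ?r" "norm (v - cvec d) \<le> ?r"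
    using assms by (auto simp: outBall_def)
  have "inner (u - cvec d) (v - cvec d) \<le> norm (u - cvec d) * norm (v - cvec d)"
    by (rule norm_cauchy_schwarz)
  also have "\<dots> \<le> ?r * ?r" using h ro_nn ri_nn by (intro mult_mono) auto
  finally have "inner (u - cvec d) (v - cvec d) \<le> (real d - 1) / ((real d)^2 * (real d + 1))"
    by (simp only: sqrt_ro)
  moreover have "1/(real d)^2 + (real d - 1) / ((real d)^2 * (real d + 1)) = 2/(real d * (real d + 1))"
    using fr1[OF dpos] .
  ultimately show ?thesis using inner_H[OF h(1,2)] by linarith
qed

lemma IO: fixes u v :: "real^'n" assumes "u \<in> inBall d" "v \<in> outBall d"
  shows "1/(real d * (real d + 1)) \<le> inner u v"
proof -
  let ?r = "sqrt ((real d - 1) / ((real d)^2 * (real d + 1)))"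
  let ?s = "sqrt (1 / ((real d)^2 * ((real d)^2 - 1)))"
  have h: "u \<in> hypH" "v \<in> hypH" "norm (u - cvec d) \<le> ?s" "norm (v - cvec d) \<le> ?r"
    using assms by (auto simp: outBall_def inBall_def)
  have "- inner (u - cvec d) (v - cvec d) \<le> norm (u - cvec d) * norm (v - cvec d)"
    using Cauchy_Schwarz_ineq2[of "u - cvec d" "v - cvec d"] by linarith
  also have "\<dots> \<le> ?s * ?r" using h ro_nn ri_nn by (intro mult_mono) auto
  finally have "- inner (u - cvec d) (v - cvec d) \<le> 1/((real d)^2 * (real d + 1))"
    using ri_ro by simp
  moreover have "1/(real d)^2 - 1/((real d)^2 * (real d + 1)) = 1/(real d * (real d + 1))"
    using fr3[OF dpos] .
  ultimately show ?thesis using inner_H[OF h(1,2)] by linarith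
qed


lemma inner_e: fixes u :: "real^'n" assumes "u \<in> hypH"
  shows "inner u (basisDist d k) = (u$k + 1/real d)/(real d + 1)"
proof -
  let ?a = "1/(real d + 1)" and ?b = "1/(real d + 1)/real d"
  have "inner u (basisDist d k) = (\<Sum>i\<in>UNIV. (if i = k then ?a * u$i else 0) + ?b * u$i)"
    by (auto simp: inner_vec_def basisDist_def algebra_simps intro!: sum.cong)
  also have "\<dots> = (\<Sum>i\<in>UNIV. (if i = k then ?a * u$i else 0)) + (\<Sum>i\<in>UNIV. ?b * u$i)"
    by (rule sum.distrib)
  also have "(\<Sum>i\<in>UNIV. (if i = k then ?a * u$i else 0)) = ?a * u$k"
    by (simp add: sum.delta)
  also have "(\<Sum>i\<in>UNIV. ?b * u$i) = ?b" by (rule sum_H_lin[OF assms])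
  finally show ?thesis using g2[OF dpos] by simp
qed

lemma e_H: "basisDist d k \<in> (hypH :: (real^'n) set)"
proof -
  let ?a = "1/(real d + 1)" and ?b = "1/(real d + 1)/real d"
  have "(\<Sum>i\<in>UNIV. (basisDist d k :: real^'n)$i) = (\<Sum>i\<in>UNIV. (if i = k then ?a else 0) + ?b)"
    by (auto simp: basisDist_def algebra_simps intro!: sum.cong)
  also have "\<dots> = (\<Sum>i\<in>UNIV. (if i = k then ?a else 0)) + (\<Sum>i\<in>(UNIV::'n set). ?b)"
    by (rule sum.distrib)
  also have "(\<Sum>i\<in>UNIV. (if i = k then ?a else 0)) = ?a"
    by (simp add: sum.delta)
  also have "(\<Sum>i\<in>(UNIV::'n set). ?b) = (real d)^2 * ?b" using card by simp
  also have "?a + (real d)^2 * ?b = 1" using g1[OF dpos] .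
  finally show ?thesis by (simp add: hypH_def)
qed

lemma e_simplex: "basisDist d k \<in> (probSimplex :: (real^'n) set)"
  using e_H dpos by (simp add: probSimplex_def hypH_def basisDist_def)

lemma e_ge_iff: fixes u :: "real^'n" assumes "u \<in> hypH"
  shows "1/(real d * (real d + 1)) \<le> inner u (basisDist d k) \<longleftrightarrow> 0 \<le> u$k"
proof -
  have p: "real d + 1 > 0" using dpos by simp
  have eq: "1/(real d * (real d + 1)) = (1/real d)/(real d + 1)" by simp
  have "(1/real d)/(real d + 1) \<le> (u$k + 1/real d)/(real d + 1) \<longleftrightarrow> 0 \<le> u$k"
    using p by (subst divide_le_cancel) auto
  then show ?thesis unfolding eq inner_e[OF assms] .
qed

lemma e_outBall: "basisDist d k \<in> (outBall d :: (real^'n) set)"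
proof -
  have "(basisDist d k :: real^'n) $ k = 1/real d"
    using dpos by (simp add: basisDist_def field_simps)
  then have "inner (basisDist d k) (basisDist d k :: real^'n) = 2/(real d * (real d + 1))"
    using inner_e[OF e_H] g3[OF dpos] by simp
  then show ?thesis using e_H outBall_iff by simp
qed

lemma simplex_H: "probSimplex \<subseteq> (hypH :: (real^'n) set)"
  by (auto simp: probSimplex_def hypH_def)

lemma simplex_e: fixes u :: "real^'n" assumes "u \<in> probSimplex"
  shows "1/(real d * (real d + 1)) \<le> inner u (basisDist d k)"
  using assms simplex_H e_ge_iff by (auto simp: probSimplex_def)

lemma inBall_H: "inBall d \<subseteq> (hypH :: (real^'n) set)"
  by (auto simp: inBall_def)

lemma inBall_simplex: "inBall d \<subseteq> (probSimplex :: (real^'n) set)"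
proof
  fix b :: "real^'n" assume b: "b \<in> inBall d"
  then have bH: "b \<in> hypH" by (auto simp: inBall_def)
  have "0 \<le> b$k" for k using IO[OF b e_outBall] e_ge_iff[OF bH] by simp
  then show "b \<in> probSimplex" using bH by (simp add: probSimplex_def hypH_def)
qed

lemma inBall_outBall: "inBall d \<subseteq> (outBall d :: (real^'n) set)"
  using g4[of "real d"] d2 by (auto simp: inBall_def outBall_def intro: order_trans)

lemma cvec_inBall: "cvec d \<in> (inBall d :: (real^'n) set)"
  using cvec_H ri_nn by (simp add: inBall_def)


lemma t_le: "1/(real d * (real d + 1)) \<le> 1/(real d)^2"
proof (rule divide_left_mono)
  show "(real d)^2 \<le> real d * (real d + 1)" using dpos by (simp add: power2_eq_square algebra_simps)
  show "0 < real d * (real d + 1) * (real d)^2" using dpos by simp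
qed simp

lemma t_eq: "1/(real d * (real d + 1)) = 1/(real d)^2 - sqrt (1 / ((real d)^2 * ((real d)^2 - 1))) * sqrt ((real d - 1) / ((real d)^2 * (real d + 1)))"
  using fr3[OF dpos] ri_ro by simp

lemma self_ge: fixes p :: "real^'n" assumes "p \<in> hypH"
  shows "1/(real d * (real d + 1)) \<le> inner p p"
  using inner_H[OF assms assms] t_le by (smt (verit) inner_ge_zero)

lemma P2: fixes u :: "real^'n"
  assumes uH: "u \<in> hypH" and all: "\<forall>b\<in>inBall d. 1/(real d * (real d + 1)) \<le> inner u b"
  shows "u \<in> outBall d"
proof (rule ccontr)
  assume nu: "u \<notin> outBall d"
  let ?ro = "sqrt ((real d - 1) / ((real d)^2 * (real d + 1)))"
  let ?ri = "sqrt (1 / ((real d)^2 * ((real d)^2 - 1)))"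
  let ?c = "cvec d :: real^'n"
  define n where "n = norm (u - ?c)"
  have nro: "n > ?ro" using nu uH by (auto simp: outBall_def n_def)
  have ro0: "?ro \<ge> 0" using ro_nn by simp
  have npos: "n > 0" using nro ro0 by linarith
  have ri0: "?ri \<ge> 0" using ri_nn by simp
  have rir: "?ri * ?ro > 0" using ri_ro dpos by simp
  define b where "b = ?c - (?ri/n) *\<^sub>R (u - ?c)"
  have bH: "b \<in> hypH"
  proof -
    have "(\<Sum>i\<in>UNIV. b$i) = (\<Sum>i\<in>UNIV. ?c$i) - (?ri/n) * ((\<Sum>i\<in>UNIV. u$i) - (\<Sum>i\<in>UNIV. ?c$i))"
      by (simp add: b_def sum_subtractf sum_distrib_left[symmetric] sum_divide_distrib[symmetric])
    then show ?thesis using uH cvec_H by (simp add: hypH_def)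
  qed
  have bc: "b - ?c = - ((?ri/n) *\<^sub>R (u - ?c))" by (simp add: b_def)
  have "norm (b - ?c) = ?ri" unfolding bc using npos ri0 by (simp add: n_def)
  then have "b \<in> inBall d" using bH by (simp add: inBall_def)
  then have "1/(real d * (real d + 1)) \<le> inner u b" using all by blast
  also have "inner u b = 1/(real d)^2 + inner (u - ?c) (b - ?c)" by (rule inner_H[OF uH bH])
  also have "inner (u - ?c) (b - ?c) = - (?ri/n) * n^2"
    unfolding bc by (simp add: n_def power2_norm_eq_inner)
  also have "\<dots> = - ?ri * n" using npos by (simp add: power2_eq_square)
  finally have "?ri * n \<le> ?ri * ?ro" using t_eq by simp
  moreover have "?ri > 0" using rir ri0 by (metis mult_zero_left order_le_less)
  ultimately show False using nro by (simp add: mult_le_cancel_left)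
qed

lemma germ_sub: "germ d A \<Longrightarrow> A \<subseteq> probSimplex \<inter> (outBall d :: (real^'n) set)"
  unfolding germ_def using outBall_iff simplex_H by blast

lemma germ_ge: "germ d A \<Longrightarrow> p \<in> A \<Longrightarrow> s \<in> A \<Longrightarrow> 1/(real d * (real d + 1)) \<le> inner p (s::real^'n)"
  unfolding germ_def by blast

lemma germ_le: "germ d A \<Longrightarrow> p \<in> A \<Longrightarrow> s \<in> A \<Longrightarrow> inner p (s::real^'n) \<le> 2/(real d * (real d + 1))"
  unfolding germ_def by blast

lemma germ_insert: fixes p :: "real^'n"
  assumes M: "germ d M" and p: "p \<in> probSimplex" "p \<in> outBall d"
    and pm: "\<forall>m\<in>M. 1/(real d * (real d + 1)) \<le> inner p m"
  shows "germ d (insert p M)"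
proof -
  have Mo: "M \<subseteq> outBall d" using germ_sub[OF M] by blast
  have pH: "p \<in> hypH" using p simplex_H by blast
  show ?thesis unfolding germ_def
  proof (intro conjI ballI)
    show "insert p M \<subseteq> probSimplex" using p germ_sub[OF M] by blast
  next
    fix x y assume xy: "x \<in> insert p M" "y \<in> insert p M"
    then have "x \<in> outBall d" "y \<in> outBall d" using Mo p by auto
    then show "inner x y \<le> 2/(real d * (real d + 1))" by (rule OO)
    show "1/(real d * (real d + 1)) \<le> inner x y"
      using xy germ_ge[OF M] pm self_ge[OF pH] by (auto simp: inner_commute)
  qed
qed

lemma hypH_eq: "(hypH :: (real^'n) set) = {u. inner (\<chi> i. 1) u = 1}"
  by (simp add: hypH_def inner_vec_def)

lemma polar_eq: "polar d A = (hypH :: (real^'n) set) \<inter> (\<Inter>v\<in>A. {u. inner v u \<ge> 1/(real d * (real d + 1))})"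
  by (auto simp: polar_def inner_commute)

lemma polar_closed: "closed (polar d (A :: (real^'n) set))"
  unfolding polar_eq hypH_eq by (intro closed_Int closed_INT closed_hyperplane ballI closed_halfspace_ge)

lemma polar_convex: "convex (polar d (A :: (real^'n) set))"
  unfolding polar_eq hypH_eq by (intro convex_Int convex_INT convex_hyperplane ballI convex_halfspace_ge)

lemma qp_sub: "qplex d Q \<Longrightarrow> Q \<subseteq> probSimplex \<inter> (outBall d :: (real^'n) set)"
  unfolding qplex_def by blast

lemma qp_ge: assumes "qplex d Q" "x \<in> Q" "y \<in> Q"
  shows "1/(real d * (real d + 1)) \<le> inner x (y::real^'n)"
proof -
  have "x \<in> polar d Q" using assms unfolding qplex_def by auto
  then show ?thesis using assms(3) by (auto simp: polar_def)
qed

lemma qp_closed: "qplex d Q \<Longrightarrow> closed (Q :: (real^'n) set)"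
  unfolding qplex_def using polar_closed by metis

lemma qp_convex: "qplex d Q \<Longrightarrow> convex (Q :: (real^'n) set)"
  unfolding qplex_def using polar_convex by metis

lemma qp_e: assumes "qplex d Q" shows "basisDist d k \<in> (Q :: (real^'n) set)"
proof -
  have "basisDist d k \<in> polar d Q"
    using qp_sub[OF assms] e_H simplex_e by (auto simp: polar_def inner_commute)
  then show ?thesis using assms by (simp add: qplex_def)
qed

lemma qp_in: assumes "qplex d Q" shows "inBall d \<subseteq> (Q :: (real^'n) set)"
proof
  fix b :: "real^'n" assume b: "b \<in> inBall d"
  have "b \<in> polar d Q"
    using qp_sub[OF assms] inBall_H b IO[OF b] by (auto simp: polar_def)
  then show "b \<in> Q" using assms by (simp add: qplex_def)
qed

lemma qp_S: assumes "qplex d Q" "G \<subseteq> Q"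
  shows "closure (convex hull (basisSimplex d \<union> inBall d \<union> G)) \<subseteq> (Q :: (real^'n) set)"
proof -
  have "basisSimplex d \<subseteq> Q" unfolding basisSimplex_def
    using qp_e[OF assms(1)] qp_convex[OF assms(1)] by (intro hull_minimal) auto
  then have "convex hull (basisSimplex d \<union> inBall d \<union> G) \<subseteq> Q"
    using qp_in[OF assms(1)] qp_convex[OF assms(1)] assms(2) by (intro hull_minimal) auto
  then show ?thesis using qp_closed[OF assms(1)] by (rule closure_minimal)
qed

lemma exists_qplex: assumes G: "germ d G" shows "\<exists>Q. qplex d Q \<and> G \<subseteq> (Q :: (real^'n) set)"
proof -
  let ?A = "{M. germ d M \<and> G \<subseteq> (M :: (real^'n) set)}"
  have "\<exists>M\<in>?A. \<forall>X\<in>?A. M \<subseteq> X \<longrightarrow> X = M"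
  proof (rule subset_Zorn)
    fix C assume C: "subset.chain ?A C"
    have CA: "C \<subseteq> ?A" and ch: "\<forall>X\<in>C. \<forall>Y\<in>C. X \<subseteq> Y \<or> Y \<subseteq> X"
      using C by (simp_all add: subset_chain_def)
    let ?U = "G \<union> \<Union>C"
    have com: "\<exists>X. germ d X \<and> p \<in> X \<and> s \<in> X" if ps: "p \<in> ?U" "s \<in> ?U" for p s
    proof (cases "p \<in> G")
      case pG: True
      show ?thesis
      proof (cases "s \<in> G")
        case True then show ?thesis using G pG by blast
      next
        case False
        then obtain Y where "Y \<in> C" "s \<in> Y" using ps by blast
        moreover have "germ d Y" "G \<subseteq> Y" using CA \<open>Y \<in> C\<close> by auto
        ultimately show ?thesis using pG by blast
      qed
    next
      case pG: False
      then obtain X where X: "X \<in> C" "p \<in> X" using ps by blast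
      have gX: "germ d X" "G \<subseteq> X" using CA X(1) by auto
      show ?thesis
      proof (cases "s \<in> G")
        case True then show ?thesis using gX X by blast
      next
        case False
        then obtain Y where Y: "Y \<in> C" "s \<in> Y" using ps by blast
        have gY: "germ d Y" using CA Y(1) by auto
        from ch X(1) Y(1) have "X \<subseteq> Y \<or> Y \<subseteq> X" by blast
        then show ?thesis using gX gY X Y by blast
      qed
    qed
    have gU: "germ d ?U" unfolding germ_def
    proof (intro conjI ballI)
      show "?U \<subseteq> probSimplex" using G CA by (auto simp: germ_def)
    next
      fix p s assume ps: "p \<in> ?U" "s \<in> ?U"
      then obtain X where X: "germ d X" "p \<in> X" "s \<in> X" using com by blast
      show "1/(real d * (real d + 1)) \<le> inner p s" using germ_ge[OF X] .
      show "inner p s \<le> 2/(real d * (real d + 1))" using germ_le[OF X] .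
    qed
    have UA: "?U \<in> ?A" using gU by simp
    have "\<forall>X\<in>C. X \<subseteq> ?U" by blast
    with UA show "\<exists>U\<in>?A. \<forall>X\<in>C. X \<subseteq> U" by (rule bexI[rotated])
  qed
  then obtain M where MA: "M \<in> ?A" and mx: "\<forall>X\<in>?A. M \<subseteq> X \<longrightarrow> X = M" by blast
  have M: "germ d M" "G \<subseteq> M" using MA by auto
  have ins: "p \<in> M" if "p \<in> probSimplex" "p \<in> outBall d" "\<forall>m\<in>M. 1/(real d * (real d + 1)) \<le> inner p m" for p
  proof -
    have "insert p M \<in> ?A" using germ_insert[OF M(1) that] M(2) by blast
    then show ?thesis using mx by blast
  qed
  have eM: "basisDist d k \<in> M" for k
  proof (rule ins)
    show "basisDist d k \<in> probSimplex" by (rule e_simplex)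
    show "basisDist d k \<in> outBall d" by (rule e_outBall)
    show "\<forall>m\<in>M. 1/(real d * (real d + 1)) \<le> inner (basisDist d k) m"
    proof
      fix m assume "m \<in> M"
      then have "m \<in> probSimplex" using germ_sub[OF M(1)] by blast
      then show "1/(real d * (real d + 1)) \<le> inner (basisDist d k) m"
        using simplex_e by (simp add: inner_commute)
    qed
  qed
  have iM: "inBall d \<subseteq> M"
  proof
    fix b :: "real^'n" assume b: "b \<in> inBall d"
    show "b \<in> M"
    proof (rule ins)
      show "b \<in> probSimplex" using b inBall_simplex by blast
      show "b \<in> outBall d" using b inBall_outBall by blast
      show "\<forall>m\<in>M. 1/(real d * (real d + 1)) \<le> inner b m"
        using germ_sub[OF M(1)] IO[OF b] by blast
    qed
  qed
  have "polar d M = M"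
  proof
    show "polar d M \<subseteq> M"
    proof
      fix u assume u: "u \<in> polar d M"
      then have uH: "u \<in> hypH" and um: "\<forall>m\<in>M. 1/(real d * (real d + 1)) \<le> inner u m"
        by (auto simp: polar_def)
      have "0 \<le> u$k" for k using um eM e_ge_iff[OF uH] by blast
      then have "u \<in> probSimplex" using uH by (simp add: probSimplex_def hypH_def)
      moreover have "u \<in> outBall d" using P2[OF uH] um iM by blast
      ultimately show "u \<in> M" using ins um by blast
    qed
    show "M \<subseteq> polar d M"
      using germ_sub[OF M(1)] simplex_H germ_ge[OF M(1)] by (auto simp: polar_def)
  qed
  then have "qplex d M" using germ_sub[OF M(1)] by (simp add: qplex_def)
  then show ?thesis using M by blast
qed


lemma sep: fixes x :: "real^'n"
  assumes G: "germ d G" and xH: "x \<in> hypH"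
    and xS: "x \<notin> closure (convex hull (basisSimplex d \<union> inBall d \<union> G))"
  shows "\<exists>p. germ d (insert p G) \<and> inner p x < 1/(real d * (real d + 1))"
proof -
  let ?S = "closure (convex hull (basisSimplex d \<union> inBall d \<union> G))"
  let ?t = "1/(real d * (real d + 1))"
  let ?c = "cvec d :: real^'n"
  obtain Q0 where Q0: "qplex d Q0" "G \<subseteq> Q0" using exists_qplex[OF G] by blast
  have SH: "?S \<subseteq> hypH" using qp_S[OF Q0] qp_sub[OF Q0(1)] simplex_H by blast
  have sub: "basisSimplex d \<union> inBall d \<union> G \<subseteq> ?S"
    by (rule order_trans[OF hull_subset closure_subset])
  have eS: "basisDist d k \<in> ?S" for k
  proof -
    have "basisDist d k \<in> basisSimplex d" unfolding basisSimplex_def by (rule hull_inc) simp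
    then show ?thesis using sub by blast
  qed
  have iS: "inBall d \<subseteq> ?S" and gS: "G \<subseteq> ?S" using sub by auto
  have cS: "?c \<in> ?S" using iS cvec_inBall by blast
  have "convex ?S" by (simp add: convex_closure)
  moreover have "closed ?S" by simp
  ultimately obtain a b where ab: "inner a x < b" "\<forall>y\<in>?S. b < inner a y"
    using separating_hyperplane_closed_point xS by blast
  define \<alpha> where "\<alpha> = inner a ?c"
  define A where "A = (\<Sum>i\<in>UNIV. a$i)"
  have alA: "\<alpha> = A / (real d)^2"
    by (simp add: \<alpha>_def A_def inner_vec_def cvec_def sum_divide_distrib)
  have ba: "b < \<alpha>" using ab(2) cS by (simp add: \<alpha>_def)
  define \<kappa> where "\<kappa> = 1/(real d)^2 - ?t"
  have kpos: "\<kappa> > 0" unfolding \<kappa>_def using fr3[OF dpos, symmetric] dpos by simp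
  define lam where "lam = \<kappa> / (\<alpha> - b)"
  have lpos: "lam > 0" using kpos ba by (simp add: lam_def)
  have lb: "lam * (b - \<alpha>) = - \<kappa>" using ba by (simp add: lam_def divide_simps algebra_simps)
  define p where "p = (\<chi> i. 1/(real d)^2 + lam * (a$i - \<alpha>) :: real^'n)"
  have ip: "inner p y = 1/(real d)^2 + lam * (inner a y - \<alpha>)" if yH: "y \<in> hypH" for y :: "real^'n"
  proof -
    have "inner p y = (\<Sum>i\<in>UNIV. (1/(real d)^2 - lam * \<alpha>) * y$i + lam * (a$i * y$i))"
      by (simp add: p_def inner_vec_def algebra_simps)
    also have "\<dots> = (\<Sum>i\<in>UNIV. (1/(real d)^2 - lam * \<alpha>) * y$i) + lam * (\<Sum>i\<in>UNIV. a$i * y$i)"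
      by (simp add: sum.distrib sum_distrib_left)
    also have "(\<Sum>i\<in>UNIV. (1/(real d)^2 - lam * \<alpha>) * y$i) = 1/(real d)^2 - lam * \<alpha>"
      by (rule sum_H_lin[OF yH])
    also have "(\<Sum>i\<in>UNIV. a$i * y$i) = inner a y" by (simp add: inner_vec_def)
    finally show ?thesis by (simp add: algebra_simps)
  qed
  have pH: "p \<in> hypH"
  proof -
    have "(\<Sum>i\<in>UNIV. p$i) = (\<Sum>i\<in>UNIV. (1/(real d)^2 - lam * \<alpha>) + lam * a$i)"
      by (rule sum.cong) (simp_all add: p_def algebra_simps)
    also have "\<dots> = (\<Sum>i\<in>(UNIV::'n set). 1/(real d)^2 - lam * \<alpha>) + lam * A"
      by (simp only: sum.distrib sum_distrib_left A_def)
    also have "\<dots> = (real d)^2 * (1/(real d)^2 - lam * \<alpha>) + lam * A" using card by simp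
    also have "\<dots> = 1" using alA dpos by (simp add: algebra_simps)
    finally show ?thesis by (simp add: hypH_def)
  qed
  have pS: "?t \<le> inner p y" if "y \<in> ?S" for y
  proof -
    have yH: "y \<in> hypH" using that SH by blast
    have "lam * (b - \<alpha>) < lam * (inner a y - \<alpha>)" using ab(2) that lpos by simp
    then show ?thesis using ip[OF yH] lb \<kappa>_def by simp
  qed
  have px: "inner p x < ?t"
  proof -
    have "lam * (inner a x - \<alpha>) < lam * (b - \<alpha>)" using ab(1) lpos by simp
    then show ?thesis using ip[OF xH] lb \<kappa>_def by simp
  qed
  have "0 \<le> p$k" for k using pS[OF eS] e_ge_iff[OF pH] by blast
  then have pD: "p \<in> probSimplex" using pH by (simp add: probSimplex_def hypH_def)
  have pO: "p \<in> outBall d" using P2[OF pH] pS iS by blast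
  have "germ d (insert p G)" using germ_insert[OF G pD pO] pS gS by blast
  then show ?thesis using px by blast
qed


lemma S_sub: "basisDist d k \<in> closure (convex hull (basisSimplex d \<union> inBall d \<union> G))"
  "inBall d \<subseteq> closure (convex hull (basisSimplex d \<union> inBall d \<union> (G :: (real^'n) set)))"
  "G \<subseteq> closure (convex hull (basisSimplex d \<union> inBall d \<union> G))"
proof -
  have sub: "basisSimplex d \<union> inBall d \<union> G \<subseteq> closure (convex hull (basisSimplex d \<union> inBall d \<union> G))"
    by (rule order_trans[OF hull_subset closure_subset])
  have "basisDist d k \<in> basisSimplex d" unfolding basisSimplex_def by (rule hull_inc) simp
  then show "basisDist d k \<in> closure (convex hull (basisSimplex d \<union> inBall d \<union> G))" using sub by blast
  show "inBall d \<subseteq> closure (convex hull (basisSimplex d \<union> inBall d \<union> (G :: (real^'n) set)))"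
    "G \<subseteq> closure (convex hull (basisSimplex d \<union> inBall d \<union> G))" using sub by auto
qed

lemma main_G: fixes G :: "(real^'n) set"
  assumes G: "germ d G"
  shows "{Q. qplex d Q \<and> G \<subseteq> Q} \<noteq> {}
    \<and> \<Inter>{Q. qplex d Q \<and> G \<subseteq> Q} = closure (convex hull (basisSimplex d \<union> inBall d \<union> G))
    \<and> \<Union>{Q. qplex d Q \<and> G \<subseteq> Q} = probSimplex \<inter> outBall d \<inter> polar d G
    \<and> polar d (\<Inter>{Q. qplex d Q \<and> G \<subseteq> Q}) = \<Union>{Q. qplex d Q \<and> G \<subseteq> Q}
    \<and> polar d (\<Union>{Q. qplex d Q \<and> G \<subseteq> Q}) = \<Inter>{Q. qplex d Q \<and> G \<subseteq> Q}"
proof -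
  let ?Qs = "{Q. qplex d Q \<and> G \<subseteq> Q}"
  let ?S = "closure (convex hull (basisSimplex d \<union> inBall d \<union> G))"
  let ?t = "1/(real d * (real d + 1))"
  obtain Q0 where Q0: "qplex d Q0" "G \<subseteq> Q0" using exists_qplex[OF G] by blast
  have ne: "?Qs \<noteq> {}" using Q0 by blast
  have I_H: "\<Inter>?Qs \<subseteq> hypH" using Q0 qp_sub[OF Q0(1)] simplex_H by blast
  have ext: "\<exists>Q\<in>?Qs. p \<in> Q" if "germ d (insert p G)" for p
    using exists_qplex[OF that] by blast
  have eqS: "\<Inter>?Qs = ?S"
  proof
    show "?S \<subseteq> \<Inter>?Qs" using qp_S by (intro Inter_greatest) blast
    show "\<Inter>?Qs \<subseteq> ?S"
    proof
      fix x assume x: "x \<in> \<Inter>?Qs"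
      show "x \<in> ?S"
      proof (rule ccontr)
        assume "x \<notin> ?S"
        then obtain p where p: "germ d (insert p G)" "inner p x < ?t"
          using sep[OF G] x I_H by blast
        then obtain Q where Q: "Q \<in> ?Qs" "p \<in> Q" using ext by blast
        then have "x \<in> Q" using x by blast
        then have "?t \<le> inner p x" using qp_ge Q by blast
        then show False using p by simp
      qed
    qed
  qed
  have eqE: "\<Union>?Qs = probSimplex \<inter> outBall d \<inter> polar d G"
  proof
    show "\<Union>?Qs \<subseteq> probSimplex \<inter> outBall d \<inter> polar d G"
    proof
      fix x assume "x \<in> \<Union>?Qs"
      then obtain Q where Q: "qplex d Q" "G \<subseteq> Q" "x \<in> Q" by blast
      have "x \<in> probSimplex \<inter> outBall d" using qp_sub[OF Q(1)] Q(3) by blast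
      moreover have "x \<in> polar d G"
        using calculation simplex_H qp_ge[OF Q(1) Q(3)] Q(2) by (auto simp: polar_def)
      ultimately show "x \<in> probSimplex \<inter> outBall d \<inter> polar d G" by blast
    qed
    show "probSimplex \<inter> outBall d \<inter> polar d G \<subseteq> \<Union>?Qs"
    proof
      fix p assume p: "p \<in> probSimplex \<inter> outBall d \<inter> polar d G"
      then have "germ d (insert p G)" using germ_insert[OF G] by (auto simp: polar_def)
      then show "p \<in> \<Union>?Qs" using ext by blast
    qed
  qed
  have P1: "polar d (\<Inter>?Qs) = \<Union>?Qs"
  proof
    show "polar d (\<Inter>?Qs) \<subseteq> \<Union>?Qs"
    proof
      fix u assume u: "u \<in> polar d (\<Inter>?Qs)"
      then have uH: "u \<in> hypH" and uy: "\<forall>y\<in>?S. ?t \<le> inner u y" by (auto simp: polar_def eqS)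
      have "0 \<le> u$k" for k using uy S_sub(1) e_ge_iff[OF uH] by blast
      then have "u \<in> probSimplex" using uH by (simp add: probSimplex_def hypH_def)
      moreover have "u \<in> outBall d" using P2[OF uH] uy S_sub(2) by blast
      moreover have "u \<in> polar d G" using uH uy S_sub(3) by (auto simp: polar_def)
      ultimately show "u \<in> \<Union>?Qs" using eqE by blast
    qed
    show "\<Union>?Qs \<subseteq> polar d (\<Inter>?Qs)"
    proof
      fix u assume "u \<in> \<Union>?Qs"
      then obtain Q where Q: "qplex d Q" "G \<subseteq> Q" "u \<in> Q" by blast
      have "u \<in> hypH" using qp_sub[OF Q(1)] Q(3) simplex_H by blast
      moreover have "\<forall>v\<in>\<Inter>?Qs. ?t \<le> inner u v" using qp_ge[OF Q(1) Q(3)] Q by blast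
      ultimately show "u \<in> polar d (\<Inter>?Qs)" by (simp add: polar_def)
    qed
  qed
  have P2': "polar d (\<Union>?Qs) = \<Inter>?Qs"
  proof
    show "\<Inter>?Qs \<subseteq> polar d (\<Union>?Qs)"
    proof
      fix y assume y: "y \<in> \<Inter>?Qs"
      have "y \<in> hypH" using y I_H by blast
      moreover have "\<forall>u\<in>\<Union>?Qs. ?t \<le> inner y u"
      proof
        fix u assume "u \<in> \<Union>?Qs"
        then obtain Q where Q: "qplex d Q" "G \<subseteq> Q" "u \<in> Q" by blast
        then have "y \<in> Q" using y by blast
        then show "?t \<le> inner y u" using qp_ge[OF Q(1) _ Q(3)] by blast
      qed
      ultimately show "y \<in> polar d (\<Union>?Qs)" by (simp add: polar_def)
    qed
    show "polar d (\<Union>?Qs) \<subseteq> \<Inter>?Qs"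
    proof
      fix x assume x: "x \<in> polar d (\<Union>?Qs)"
      then have xH: "x \<in> hypH" and xu: "\<forall>u\<in>\<Union>?Qs. ?t \<le> inner x u" by (auto simp: polar_def)
      show "x \<in> \<Inter>?Qs"
      proof (rule ccontr)
        assume "x \<notin> \<Inter>?Qs"
        then have "x \<notin> ?S" using eqS by simp
        then obtain p where p: "germ d (insert p G)" "inner p x < ?t"
          using sep[OF G xH] by blast
        then have "p \<in> \<Union>?Qs" using ext by blast
        then have "?t \<le> inner x p" using xu by blast
        then show False using p by (simp add: inner_commute)
      qed
    qed
  qed
  show ?thesis using ne eqS eqE P1 P2' by blast
qed

end

theorem mainTheorem4:
  fixes d :: nat and G :: "(real^'n) set"
  assumes "d \<ge> 2" and "CARD('n) = d^2" and "germ d G"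
  shows "{Q. qplex d Q \<and> G \<subseteq> Q} \<noteq> {}
    \<and> \<Inter>{Q. qplex d Q \<and> G \<subseteq> Q} = closure (convex hull (basisSimplex d \<union> inBall d \<union> G))
    \<and> \<Union>{Q. qplex d Q \<and> G \<subseteq> Q} = probSimplex \<inter> outBall d \<inter> polar d G
    \<and> polar d (\<Inter>{Q. qplex d Q \<and> G \<subseteq> Q}) = \<Union>{Q. qplex d Q \<and> G \<subseteq> Q}
    \<and> polar d (\<Union>{Q. qplex d Q \<and> G \<subseteq> Q}) = \<Inter>{Q. qplex d Q \<and> G \<subseteq> Q}
    \<and> \<Inter>{Q :: (real^'n) set. qplex d Q} = closure (convex hull (basisSimplex d \<union> inBall d))
    \<and> \<Union>{Q :: (real^'n) set. qplex d Q} = probSimplex \<inter> outBall d"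
proof -
  have g0: "germ d ({} :: (real^'n) set)" by (simp add: germ_def)
  have M: "{Q. qplex d Q \<and> G \<subseteq> Q} \<noteq> {}
    \<and> \<Inter>{Q. qplex d Q \<and> G \<subseteq> Q} = closure (convex hull (basisSimplex d \<union> inBall d \<union> G))
    \<and> \<Union>{Q. qplex d Q \<and> G \<subseteq> Q} = probSimplex \<inter> outBall d \<inter> polar d G
    \<and> polar d (\<Inter>{Q. qplex d Q \<and> G \<subseteq> Q}) = \<Union>{Q. qplex d Q \<and> G \<subseteq> Q}
    \<and> polar d (\<Union>{Q. qplex d Q \<and> G \<subseteq> Q}) = \<Inter>{Q. qplex d Q \<and> G \<subseteq> Q}"
    by (rule main_G[OF assms(1,2,3)])
  note M0 = main_G[OF assms(1,2) g0]
  have pe: "polar d ({} :: (real^'n) set) = hypH" by (auto simp: polar_def)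
  have "\<Inter>{Q :: (real^'n) set. qplex d Q} = closure (convex hull (basisSimplex d \<union> inBall d))"
    using M0 by simp
  moreover have "\<Union>{Q :: (real^'n) set. qplex d Q} = probSimplex \<inter> outBall d"
    using M0 pe simplex_H[OF assms(1,2)] by auto
  ultimately show ?thesis using M by blast
qed
end
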